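(* Let $W$ be a real symmetric $n\times n$ matrix with non-negative entries $w_{i,j}$ and zero diagonal, let $\lambda\ge 0$, and let $z\in\mathbb{C}^n$. If $$\lambda\,\Bigl(\max_{i}\sum_{j\neq i} w_{i,j}\Bigr) < 1,$$ then the function $x\mapsto D_{\lambda,W}(x;z)$ is strictly convex on $\mathbb{C}^n$ (viewed as $\mathbb{R}^{2n}$). In particular, it has a unique minimizer.
   Context: For $x\in\mathbb{C}^n$, $|x|$ denotes the vector of magnitudes $(|x_1|,\dots,|x_n|)$ and $\|x\|_1=\sum_i |x_i|$. The penalty is $P_W(x)=\|x\|_1+\frac12\sum_{i,j} w_{i,j}|x_i x_j| = \|x\|_1+\frac12|x|^T W|x|$. For $\lambda\ge0$ and $z\in\mathbb{C}^n$, $D_{\lambda,W}(x;z)=\frac12\|z-x\|_2^2+\lambda P_W(x)$. $\mathbb{C}^n$ is identified with $\mathbb{R}^{2n}$, with inner product $\langle x,y\rangle=\sum_i \mathrm{Re}(x_i \overline{y_i})$. *)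

theory Defs
  imports "HOL-Analysis.Analysis"
begin

text \<open>Strict convexity of a real-valued function on a subset of a real vector space.
  Vectors in C^n are modelled as complex ^ 'n, which is a real vector space
  (isomorphic to R^(2n)).\<close>
definition strict_convex_on :: "'a::real_vector set \<Rightarrow> ('a \<Rightarrow> real) \<Rightarrow> bool" where
  "strict_convex_on S f \<longleftrightarrow>
     (\<forall>x\<in>S. \<forall>y\<in>S. x \<noteq> y \<longrightarrow> (\<forall>u::real. 0 < u \<longrightarrow> u < 1 \<longrightarrow>
        f ((1 - u) *\<^sub>R x + u *\<^sub>R y) < (1 - u) * f x + u * f y))"

definition penalty :: "real ^ 'n ^ 'n \<Rightarrow> complex ^ 'n \<Rightarrow> real" where
  "penalty W x = (\<Sum>i\<in>UNIV. cmod (x $ i))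
      + 1/2 * (\<Sum>i\<in>UNIV. \<Sum>j\<in>UNIV. W $ i $ j * cmod (x $ i * x $ j))"

definition Dfun :: "real \<Rightarrow> real ^ 'n ^ 'n \<Rightarrow> complex ^ 'n \<Rightarrow> complex ^ 'n \<Rightarrow> real" where
  "Dfun lam W z x = 1/2 * (\<Sum>i\<in>UNIV. (cmod (z $ i - x $ i))\<^sup>2) + lam * penalty W x"

end

theory Submission
  imports Defs
begin

lemma gap_sq:
  fixes a b c :: complex and u :: real
  shows "(1-u)*cmod(c-a)^2 + u*cmod(c-b)^2 - cmod(c - ((1-u) *\<^sub>R a + u *\<^sub>R b))^2
         = u*(1-u)*cmod(a-b)^2"
  unfolding cmod_power2 by (simp add: scaleR_conv_of_real algebra_simps power2_eq_square)

lemma gap_sq0: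
  fixes a b :: complex and u :: real
  shows "(1-u)*cmod a^2 + u*cmod b^2 - cmod ((1-u) *\<^sub>R a + u *\<^sub>R b)^2
         = u*(1-u)*cmod(a-b)^2"
  unfolding cmod_power2 by (simp add: scaleR_conv_of_real algebra_simps power2_eq_square)

lemma comb_lemma:
  fixes A B C X Y Z G u l :: real
  assumes "(1-u)*A + u*B - C = u*(1-u)*G" "(1-u)*X + u*Y - Z = u*(1-u)*G"
  shows "(1-u)*(1/2*A - l/2*X) + u*(1/2*B - l/2*Y) - (1/2*C - l/2*Z) = u*(1-u)/2*(1-l)*G"
proof -
  have "(1-u)*(1/2*A - l/2*X) + u*(1/2*B - l/2*Y) - (1/2*C - l/2*Z)
     = 1/2*((1-u)*A + u*B - C) - l/2*((1-u)*X + u*Y - Z)" by (simp add: field_simps)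
  also have "\<dots> = u*(1-u)/2*(1-l)*G" unfolding assms by (simp add: algebra_simps)
  finally show ?thesis .
qed

lemma norm_sq_vec: "(norm (v::complex^'n))^2 = (\<Sum>i\<in>UNIV. cmod (v$i)^2)"
  unfolding norm_vec_def L2_set_def by (simp add: sum_nonneg)

lemma sq_conv:
  fixes a b c u :: real
  assumes "0 \<le> c" "c \<le> (1-u)*a + u*b" "0 \<le> u" "u \<le> 1"
  shows "c^2 \<le> (1-u)*a^2 + u*b^2"
proof -
  have "c^2 \<le> ((1-u)*a + u*b)^2" using assms by (simp add: power_mono)
  also have "\<dots> \<le> (1-u)*a^2 + u*b^2"
  proof -
    have "(1-u)*a^2 + u*b^2 - ((1-u)*a + u*b)^2 = u*(1-u)*(a-b)^2"
      by (simp add: algebra_simps power2_eq_square)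
    moreover have "u*(1-u)*(a-b)^2 \<ge> 0" using assms by simp
    ultimately show ?thesis by linarith
  qed
  finally show ?thesis .
qed

theorem proposition1:
  fixes W :: "real ^ 'n ^ 'n" and lam :: real and z :: "complex ^ 'n"
  assumes "\<forall>i j. W $ i $ j = W $ j $ i"
    and "\<forall>i j. 0 \<le> W $ i $ j"
    and "\<forall>i. W $ i $ i = 0"
    and "0 \<le> lam"
    and "lam * Max (range (\<lambda>i. \<Sum>j\<in>UNIV - {i}. W $ i $ j)) < 1"
  shows "strict_convex_on UNIV (Dfun lam W z)
       \<and> (\<exists>!x. \<forall>y. Dfun lam W z x \<le> Dfun lam W z y)"
proof -
  note sym = assms(1) and nn = assms(2) and dg = assms(3) and lam0 = assms(4)
  define s where "s i = (\<Sum>j\<in>UNIV. W $ i $ j)" for i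
  have s_eq: "s i = (\<Sum>j\<in>UNIV - {i}. W $ i $ j)" for i
  proof -
    have "s i = W $ i $ i + (\<Sum>j\<in>UNIV - {i}. W $ i $ j)"
      unfolding s_def by (simp add: sum.remove[of UNIV i])
    then show ?thesis using dg by simp
  qed
  have ls: "lam * s i < 1" for i
  proof -
    have "s i \<le> Max (range (\<lambda>i. \<Sum>j\<in>UNIV - {i}. W $ i $ j))"
      unfolding s_eq by (rule Max_ge) auto
    then have "lam * s i \<le> lam * Max (range (\<lambda>i. \<Sum>j\<in>UNIV - {i}. W $ i $ j))"
      using lam0 by (simp add: mult_left_mono)
    then show ?thesis using assms(5) by linarith
  qed
  define Q where "Q x = (\<Sum>i\<in>UNIV. 1/2 * cmod (z$i - x$i)^2 - lam * s i / 2 * cmod (x$i)^2)"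
    for x :: "complex^'n"
  define B where "B x = lam * (\<Sum>i\<in>UNIV. cmod (x$i))
      + lam/4 * (\<Sum>i\<in>UNIV. \<Sum>j\<in>UNIV. W$i$j * (cmod (x$i) + cmod (x$j))^2)"
    for x :: "complex^'n"
  have DQB: "Dfun lam W z x = Q x + B x" for x
  proof -
    define a where "a i = cmod (x$i)" for i
    have e1: "(\<Sum>i\<in>UNIV. \<Sum>j\<in>UNIV. W$i$j * (a i)^2) = (\<Sum>i\<in>UNIV. s i * (a i)^2)"
      unfolding s_def by (simp add: sum_distrib_right)
    have e2: "(\<Sum>i\<in>UNIV. \<Sum>j\<in>UNIV. W$i$j * (a j)^2) = (\<Sum>i\<in>UNIV. s i * (a i)^2)"
    proof -
      have "(\<Sum>i\<in>UNIV. \<Sum>j\<in>UNIV. W$i$j * (a j)^2) = (\<Sum>j\<in>UNIV. \<Sum>i\<in>UNIV. W$j$i * (a j)^2)"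
        using sym by (subst sum.swap) simp
      then show ?thesis using e1 by simp
    qed
    have e: "(\<Sum>i\<in>UNIV. \<Sum>j\<in>UNIV. W$i$j * (a i + a j)^2)
        = 2 * (\<Sum>i\<in>UNIV. s i * (a i)^2) + 2 * (\<Sum>i\<in>UNIV. \<Sum>j\<in>UNIV. W$i$j * (a i * a j))"
    proof -
      have "(\<Sum>i\<in>UNIV. \<Sum>j\<in>UNIV. W$i$j * (a i + a j)^2)
          = (\<Sum>i\<in>UNIV. \<Sum>j\<in>UNIV. W$i$j * (a i)^2 + W$i$j * (a j)^2 + 2 * (W$i$j * (a i * a j)))"
        by (intro sum.cong refl) (simp add: power2_eq_square algebra_simps)
      also have "\<dots> = (\<Sum>i\<in>UNIV. \<Sum>j\<in>UNIV. W$i$j * (a i)^2) + (\<Sum>i\<in>UNIV. \<Sum>j\<in>UNIV. W$i$j * (a j)^2)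
          + 2 * (\<Sum>i\<in>UNIV. \<Sum>j\<in>UNIV. W$i$j * (a i * a j))"
        by (simp add: sum.distrib sum_distrib_left)
      finally show ?thesis using e1 e2 by simp
    qed
    have "Dfun lam W z x = 1/2 * (\<Sum>i\<in>UNIV. (cmod (z $ i - x $ i))\<^sup>2)
       + lam * (\<Sum>i\<in>UNIV. a i) + lam/2 * (\<Sum>i\<in>UNIV. \<Sum>j\<in>UNIV. W$i$j * (a i * a j))"
      unfolding Dfun_def penalty_def a_def by (simp add: norm_mult algebra_simps)
    also have "\<dots> = Q x + B x"
      unfolding Q_def B_def a_def[symmetric] e
      by (simp add: sum_subtractf sum_distrib_left algebra_simps)
    finally show ?thesis .
  qed
  have Bconv: "B ((1-u) *\<^sub>R x + u *\<^sub>R y) \<le> (1-u) * B x + u * B y"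
    if u: "0 \<le> u" "u \<le> 1" for x y u
  proof -
    define v where "v = (1-u) *\<^sub>R x + u *\<^sub>R y"
    have vi: "cmod (v$i) \<le> (1-u) * cmod (x$i) + u * cmod (y$i)" for i
    proof -
      have "cmod (v$i) = cmod ((1-u) *\<^sub>R x$i + u *\<^sub>R y$i)" unfolding v_def by simp
      also have "\<dots> \<le> cmod ((1-u) *\<^sub>R x$i) + cmod (u *\<^sub>R y$i)" by (rule norm_triangle_ineq)
      also have "\<dots> = (1-u) * cmod (x$i) + u * cmod (y$i)" using u by simp
      finally show ?thesis .
    qed
    have t1: "(\<Sum>i\<in>UNIV. cmod (v$i)) \<le> (1-u) * (\<Sum>i\<in>UNIV. cmod (x$i)) + u * (\<Sum>i\<in>UNIV. cmod (y$i))"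
    proof -
      have "(\<Sum>i\<in>UNIV. cmod (v$i)) \<le> (\<Sum>i\<in>UNIV. (1-u) * cmod (x$i) + u * cmod (y$i))"
        by (rule sum_mono) (rule vi)
      then show ?thesis by (simp add: sum.distrib sum_distrib_left)
    qed
    have t2: "(\<Sum>i\<in>UNIV. \<Sum>j\<in>UNIV. W$i$j * (cmod (v$i) + cmod (v$j))^2)
       \<le> (1-u) * (\<Sum>i\<in>UNIV. \<Sum>j\<in>UNIV. W$i$j * (cmod (x$i) + cmod (x$j))^2)
         + u * (\<Sum>i\<in>UNIV. \<Sum>j\<in>UNIV. W$i$j * (cmod (y$i) + cmod (y$j))^2)"
    proof -
      have "(\<Sum>i\<in>UNIV. \<Sum>j\<in>UNIV. W$i$j * (cmod (v$i) + cmod (v$j))^2)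
          \<le> (\<Sum>i\<in>UNIV. \<Sum>j\<in>UNIV. (1-u) * (W$i$j * (cmod (x$i) + cmod (x$j))^2)
                + u * (W$i$j * (cmod (y$i) + cmod (y$j))^2))"
      proof (intro sum_mono)
        fix i j
        have "(cmod (v$i) + cmod (v$j))^2 \<le> (1-u) * (cmod (x$i) + cmod (x$j))^2 + u * (cmod (y$i) + cmod (y$j))^2"
          apply (rule sq_conv)
          using vi[of i] vi[of j] u by (auto simp: algebra_simps)
        then have "W$i$j * (cmod (v$i) + cmod (v$j))^2 \<le> W$i$j * ((1-u) * (cmod (x$i) + cmod (x$j))^2 + u * (cmod (y$i) + cmod (y$j))^2)"
          using nn by (simp add: mult_left_mono)
        then show "W$i$j * (cmod (v$i) + cmod (v$j))^2 \<le> (1-u) * (W$i$j * (cmod (x$i) + cmod (x$j))^2)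
                + u * (W$i$j * (cmod (y$i) + cmod (y$j))^2)" by (simp add: algebra_simps)
      qed
      then show ?thesis by (simp add: sum.distrib sum_distrib_left)
    qed
    have "B v \<le> (1-u) * B x + u * B y"
    proof -
      have a: "lam * (\<Sum>i\<in>UNIV. cmod (v$i)) \<le> lam * ((1-u) * (\<Sum>i\<in>UNIV. cmod (x$i)) + u * (\<Sum>i\<in>UNIV. cmod (y$i)))"
        using t1 lam0 by (rule mult_left_mono)
      have b: "lam/4 * (\<Sum>i\<in>UNIV. \<Sum>j\<in>UNIV. W$i$j * (cmod (v$i) + cmod (v$j))^2)
         \<le> lam/4 * ((1-u) * (\<Sum>i\<in>UNIV. \<Sum>j\<in>UNIV. W$i$j * (cmod (x$i) + cmod (x$j))^2)
         + u * (\<Sum>i\<in>UNIV. \<Sum>j\<in>UNIV. W$i$j * (cmod (y$i) + cmod (y$j))^2))"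
        using t2 lam0 by (intro mult_left_mono) auto
      show ?thesis unfolding B_def using a b by (simp add: algebra_simps add_divide_distrib diff_divide_distrib)
    qed
    then show ?thesis unfolding v_def .
  qed
  have Qgap: "(1-u) * Q x + u * Q y - Q ((1-u) *\<^sub>R x + u *\<^sub>R y)
      = (\<Sum>i\<in>UNIV. u*(1-u)/2 * (1 - lam * s i) * cmod (x$i - y$i)^2)" for x y u
  proof -
    define v where "v = (1-u) *\<^sub>R x + u *\<^sub>R y"
    define f where "f w i = 1/2 * cmod (z$i - w$i)^2 - lam * s i / 2 * cmod (w$i)^2" for w :: "complex^'n" and i
    have Qf: "Q w = sum (f w) UNIV" for w unfolding Q_def f_def by simp
    have "(1-u) * Q x + u * Q y - Q v = (\<Sum>i\<in>UNIV. (1-u) * f x i + u * f y i - f v i)"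
      unfolding Qf by (simp add: sum_distrib_left sum.distrib sum_subtractf)
    also have "\<dots> = (\<Sum>i\<in>UNIV. u*(1-u)/2 * (1 - lam * s i) * cmod (x$i - y$i)^2)"
    proof (rule sum.cong[OF refl])
      fix i
      have vi: "v$i = (1-u) *\<^sub>R x$i + u *\<^sub>R y$i" unfolding v_def by simp
      show "(1-u) * f x i + u * f y i - f v i = u*(1-u)/2 * (1 - lam * s i) * cmod (x$i - y$i)^2"
        unfolding f_def vi using gap_sq[of u "z$i" "x$i" "y$i"] gap_sq0[of u "x$i" "y$i"]
        by (intro comb_lemma) (simp_all only: mult.assoc)
    qed
    finally show ?thesis unfolding v_def .
  qed
  have sc: "strict_convex_on UNIV (Dfun lam W z)"
    unfolding strict_convex_on_def
  proof (intro ballI allI impI)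
    fix x y :: "complex^'n" and u :: real
    assume xy: "x \<noteq> y" and u: "0 < u" "u < 1"
    obtain k where k: "x$k \<noteq> y$k" using xy by (auto simp: vec_eq_iff)
    have "0 < (\<Sum>i\<in>UNIV. u*(1-u)/2 * (1 - lam * s i) * cmod (x$i - y$i)^2)"
    proof (rule sum_pos2[of UNIV k])
      show "0 < u*(1-u)/2 * (1 - lam * s k) * cmod (x$k - y$k)^2"
        using u k ls[of k] by simp
      show "0 \<le> u*(1-u)/2 * (1 - lam * s i) * cmod (x$i - y$i)^2" for i
        using u ls[of i] by simp
    qed simp_all
    then have "Q ((1-u) *\<^sub>R x + u *\<^sub>R y) < (1-u) * Q x + u * Q y" using Qgap[of u x y] by linarith
    moreover have "B ((1-u) *\<^sub>R x + u *\<^sub>R y) \<le> (1-u) * B x + u * B y" using u by (intro Bconv) auto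
    ultimately show "Dfun lam W z ((1 - u) *\<^sub>R x + u *\<^sub>R y) < (1 - u) * Dfun lam W z x + u * Dfun lam W z y"
      unfolding DQB by (simp add: algebra_simps)
  qed
  have lower: "Dfun lam W z x \<ge> 1/2 * (norm (z - x))^2" for x
  proof -
    have "penalty W x \<ge> 0" unfolding penalty_def using nn
      by (intro add_nonneg_nonneg sum_nonneg mult_nonneg_nonneg) auto
    then show ?thesis unfolding Dfun_def norm_sq_vec using lam0 by simp
  qed
  have D0: "Dfun lam W z 0 = 1/2 * (norm z)^2"
    unfolding Dfun_def penalty_def norm_sq_vec by simp
  have cont: "continuous_on (cball z (norm z)) (Dfun lam W z)"
    unfolding Dfun_def penalty_def by (intro continuous_intros)
  obtain x where x: "x \<in> cball z (norm z)" and xm: "\<forall>y\<in>cball z (norm z). Dfun lam W z x \<le> Dfun lam W z y"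
    using continuous_attains_inf[OF compact_cball _ cont] by auto
  have glob: "\<forall>y. Dfun lam W z x \<le> Dfun lam W z y"
  proof
    fix y
    show "Dfun lam W z x \<le> Dfun lam W z y"
    proof (cases "y \<in> cball z (norm z)")
      case True then show ?thesis using xm by auto
    next
      case False
      then have "norm z < norm (z - y)" by (simp add: dist_norm)
      then have "(norm z)^2 < (norm (z - y))^2" by (simp add: power_strict_mono)
      moreover have "0 \<in> cball z (norm z)" by simp
      ultimately show ?thesis using xm lower[of y] D0 by fastforce
    qed
  qed
  have uniq: "x' = y'" if "\<forall>y. Dfun lam W z x' \<le> Dfun lam W z y" "\<forall>y. Dfun lam W z y' \<le> Dfun lam W z y" for x' y'
  proof (rule ccontr)
    assume ne: "x' \<noteq> y'"
    let ?m = "(1 - 1/2) *\<^sub>R x' + (1/2::real) *\<^sub>R y'"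
    have "Dfun lam W z ?m < (1 - 1/2) * Dfun lam W z x' + 1/2 * Dfun lam W z y'"
    proof -
      have "(0::real) < 1/2" "(1/2::real) < 1" by simp_all
      then show ?thesis using sc ne unfolding strict_convex_on_def by blast
    qed
    moreover have "Dfun lam W z x' \<le> Dfun lam W z ?m" "Dfun lam W z y' \<le> Dfun lam W z ?m"
      using that by auto
    ultimately show False by (simp add: field_simps)
  qed
  show ?thesis using sc glob uniq by blast
qed

end
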